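(* Fix $t>0$. For $k\ge0$ and $n\ge1$ let $$q_{k,n}:=\frac{\int(\mathcal{L}_t-\mathcal{L}_{t,n})\,\mathcal{L}_{t,n}^k\,(\mathcal{L}_t-\mathcal{L}_{t,n})(f_0)\,dm}{\mu(B_n)},$$ where $m$ is Lebesgue measure. If for each $k\ge0$ the limit $q_k:=\lim_{n\to\infty}q_{k,n}$ exists, then $\sum_{k=0}^\infty q_k\le1$.
   Context: Consider on $\mathbb{R}^d$ the SDE $dX_t=b(X_t)dt+dW_t$, $X_0=x$, with $W$ a standard Brownian motion, $b$ Lipschitz continuous, and $\langle b(x),x\rangle\le R_1-R_2\|x\|^2$ for constants $R_1\in\mathbb{R}$, $R_2>0$. $S_t(x,y)$ is the transition density and $(\mathcal{L}_tf)(y):=\int S_t(x,y)f(x)\,dx$. The unique invariant probability measure is $\mu$ with Lebesgue density $f_0$. Fix $x_0\in\mathbb{R}^d$ and a real sequence $u_n\to+\infty$; $B_n:=B(x_0,e^{-u_n})$ and $(\mathcal{L}_{t,n}f)(x):=1_{B_n^c}(x)(\mathcal{L}_tf)(x)$. *)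

theory Defs
  imports "HOL-Probability.Probability"
begin

definition gauss_density :: "real \<Rightarrow> 'a::euclidean_space \<Rightarrow> real" where
  "gauss_density s x = (2 * pi * s) powr (- real DIM('a) / 2) * exp (- (norm x)\<^sup>2 / (2 * s))"

definition brownian_motion :: "'w measure \<Rightarrow> (real \<Rightarrow> 'w \<Rightarrow> 'a::euclidean_space) \<Rightarrow> bool" where
  "brownian_motion M W \<longleftrightarrow>
     prob_space M \<and>
     (\<forall>t\<ge>0. W t \<in> borel_measurable M) \<and>
     (\<forall>\<omega>\<in>space M. W 0 \<omega> = 0 \<and> continuous_on {0..} (\<lambda>t. W t \<omega>)) \<and>
     (\<forall>s t. 0 \<le> s \<longrightarrow> s < t \<longrightarrow>
        distributed M lborel (\<lambda>\<omega>. W t \<omega> - W s \<omega>) (\<lambda>x. ennreal (gauss_density (t - s) x))) \<and>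
     (\<forall>(n::nat) ts. (\<forall>i<n. 0 \<le> ts i \<and> ts i < ts (Suc i)) \<longrightarrow>
        prob_space.indep_vars M (\<lambda>_. borel) (\<lambda>i \<omega>. W (ts (Suc i)) \<omega> - W (ts i) \<omega>) {..<n})"

definition sde_solution :: "'w measure \<Rightarrow> ('a::euclidean_space \<Rightarrow> 'a) \<Rightarrow> (real \<Rightarrow> 'w \<Rightarrow> 'a)
    \<Rightarrow> 'a \<Rightarrow> (real \<Rightarrow> 'w \<Rightarrow> 'a) \<Rightarrow> bool" where
  "sde_solution M b W x X \<longleftrightarrow>
     (\<forall>\<omega>\<in>space M. continuous_on {0..} (\<lambda>t. X t \<omega>) \<and>
        (\<forall>t\<ge>0. X t \<omega> = x + integral {0..t} (\<lambda>r. b (X r \<omega>)) + W t \<omega>))"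

definition transfer_op :: "('a::euclidean_space \<Rightarrow> 'a \<Rightarrow> real) \<Rightarrow> ('a \<Rightarrow> real) \<Rightarrow> 'a \<Rightarrow> real" where
  "transfer_op St f = (\<lambda>y. \<integral>x. St x y * f x \<partial>lborel)"

text \<open>Perturbed operator (L_{t,n} f)(x) = 1_{B^c}(x) (L_t f)(x).\<close>
definition open_op :: "('a::euclidean_space \<Rightarrow> 'a \<Rightarrow> real) \<Rightarrow> 'a set \<Rightarrow> ('a \<Rightarrow> real) \<Rightarrow> 'a \<Rightarrow> real" where
  "open_op St B f = (\<lambda>x. indicator (- B) x * transfer_op St f x)"

definition diff_op :: "('a::euclidean_space \<Rightarrow> 'a \<Rightarrow> real) \<Rightarrow> 'a set \<Rightarrow> ('a \<Rightarrow> real) \<Rightarrow> 'a \<Rightarrow> real" where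
  "diff_op St B f = (\<lambda>x. transfer_op St f x - open_op St B f x)"

text \<open>q_{k,n} for the hole B, with \<mu> the measure with density f0.\<close>
definition q_coeff :: "('a::euclidean_space \<Rightarrow> 'a \<Rightarrow> real) \<Rightarrow> ('a \<Rightarrow> real) \<Rightarrow> 'a set \<Rightarrow> nat \<Rightarrow> real" where
  "q_coeff St f0 B k =
     (\<integral>y. diff_op St B ((open_op St B ^^ k) (diff_op St B f0)) y \<partial>lborel)
       / measure (density lborel (\<lambda>x. ennreal (f0 x))) B"

end

theory Submission
  imports Defs
begin

lemma tr_meas:
  fixes St :: "'a::euclidean_space \<Rightarrow> 'a \<Rightarrow> real"
  assumes Sm: "(\<lambda>(x, y). St x y) \<in> borel_measurable (lborel \<Otimes>\<^sub>M lborel)"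
    and h: "h \<in> borel_measurable lborel"
  shows "transfer_op St h \<in> borel_measurable lborel"
proof -
  have "(\<lambda>(y, x). St x y * h x) \<in> borel_measurable (lborel \<Otimes>\<^sub>M lborel)"
  proof -
    have "(\<lambda>p. St (snd p) (fst p)) \<in> borel_measurable (lborel \<Otimes>\<^sub>M lborel)"
      using measurable_compose[OF measurable_pair_swap' Sm] by (simp add: case_prod_beta)
    moreover have "(\<lambda>p. h (snd p)) \<in> borel_measurable (lborel \<Otimes>\<^sub>M lborel)"
      using h by measurable
    ultimately have "(\<lambda>p. St (snd p) (fst p) * h (snd p)) \<in> borel_measurable (lborel \<Otimes>\<^sub>M lborel)"
      by (rule borel_measurable_times)
    then show ?thesis by (simp add: case_prod_beta)
  qed
  then show ?thesis unfolding transfer_op_def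
    by (rule lborel.borel_measurable_lebesgue_integral)
qed

lemma tr_enn:
  fixes St :: "'a::euclidean_space \<Rightarrow> 'a \<Rightarrow> real"
  assumes Sm: "(\<lambda>(x, y). St x y) \<in> borel_measurable (lborel \<Otimes>\<^sub>M lborel)"
    and Sn: "\<And>x y. St x y \<ge> 0"
    and h: "h \<in> borel_measurable lborel" and hn: "\<And>x. h x \<ge> 0"
  shows "ennreal (transfer_op St h y) \<le> (\<integral>\<^sup>+x. ennreal (St x y * h x) \<partial>lborel)"
proof -
  have "(\<lambda>x. St x y) \<in> borel_measurable lborel"
    using measurable_Pair1[OF Sm, of y] by simp
  then have "(\<lambda>x. St x y * h x) \<in> borel_measurable lborel" using h by measurable
  then have "transfer_op St h y = enn2real (\<integral>\<^sup>+x. ennreal (St x y * h x) \<partial>lborel)"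
    unfolding transfer_op_def by (rule integral_eq_nn_integral) (use Sn hn in auto)
  then show ?thesis by (simp add: ennreal_enn2real_if)
qed

lemma tr_contract:
  fixes St :: "'a::euclidean_space \<Rightarrow> 'a \<Rightarrow> real"
  assumes Sm: "(\<lambda>(x, y). St x y) \<in> borel_measurable (lborel \<Otimes>\<^sub>M lborel)"
    and Sn: "\<And>x y. St x y \<ge> 0"
    and S1: "\<And>x. (\<integral>\<^sup>+y. ennreal (St x y) \<partial>lborel) = 1"
    and h: "h \<in> borel_measurable lborel" and hn: "\<And>x. h x \<ge> 0"
  shows "(\<integral>\<^sup>+y. ennreal (transfer_op St h y) \<partial>lborel) \<le> (\<integral>\<^sup>+x. ennreal (h x) \<partial>lborel)"
proof -
  have m: "(\<lambda>(x, y). ennreal (St x y * h x)) \<in> borel_measurable (lborel \<Otimes>\<^sub>M lborel)"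
  proof -
    have "(\<lambda>p. h (fst p)) \<in> borel_measurable (lborel \<Otimes>\<^sub>M lborel)"
      using h by measurable
    then have "(\<lambda>p. St (fst p) (snd p) * h (fst p)) \<in> borel_measurable (lborel \<Otimes>\<^sub>M lborel)"
      using Sm by (intro borel_measurable_times) (auto simp: case_prod_beta)
    then show ?thesis by (simp add: case_prod_beta)
  qed
  have "(\<integral>\<^sup>+y. ennreal (transfer_op St h y) \<partial>lborel)
      \<le> (\<integral>\<^sup>+y. (\<integral>\<^sup>+x. ennreal (St x y * h x) \<partial>lborel) \<partial>lborel)"
    by (intro nn_integral_mono tr_enn[OF Sm Sn h hn])
  also have "\<dots> = (\<integral>\<^sup>+x. (\<integral>\<^sup>+y. ennreal (St x y * h x) \<partial>lborel) \<partial>lborel)"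
    using lborel_pair.Fubini'[OF m] by simp
  also have "\<dots> = (\<integral>\<^sup>+x. ennreal (h x) * (\<integral>\<^sup>+y. ennreal (St x y) \<partial>lborel) \<partial>lborel)"
  proof (intro nn_integral_cong)
    fix x
    have "(\<integral>\<^sup>+y. ennreal (St x y * h x) \<partial>lborel) = (\<integral>\<^sup>+y. ennreal (h x) * ennreal (St x y) \<partial>lborel)"
      using Sn hn by (simp add: ennreal_mult mult.commute)
    also have "\<dots> = ennreal (h x) * (\<integral>\<^sup>+y. ennreal (St x y) \<partial>lborel)"
      by (rule nn_integral_cmult) (use measurable_Pair2[OF Sm, of x] in simp)
    finally show "(\<integral>\<^sup>+y. ennreal (St x y * h x) \<partial>lborel) = ennreal (h x) * (\<integral>\<^sup>+y. ennreal (St x y) \<partial>lborel)" .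
  qed
  also have "\<dots> = (\<integral>\<^sup>+x. ennreal (h x) \<partial>lborel)" using S1 by simp
  finally show ?thesis .
qed

lemma ops_basic:
  fixes St :: "'a::euclidean_space \<Rightarrow> 'a \<Rightarrow> real"
  assumes Sm: "(\<lambda>(x, y). St x y) \<in> borel_measurable (lborel \<Otimes>\<^sub>M lborel)"
    and Sn: "\<And>x y. St x y \<ge> 0"
    and B: "B \<in> sets borel"
    and h: "h \<in> borel_measurable lborel" and hn: "\<And>x. h x \<ge> 0"
  shows "open_op St B h \<in> borel_measurable lborel" "diff_op St B h \<in> borel_measurable lborel"
    "\<And>x. open_op St B h x \<ge> 0" "\<And>x. diff_op St B h x \<ge> 0"
    "\<And>x. diff_op St B h x = indicator B x * transfer_op St h x"
proof -
  have tm: "transfer_op St h \<in> borel_measurable lborel" by (rule tr_meas[OF Sm h])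
  have tn: "\<And>y. transfer_op St h y \<ge> 0"
    unfolding transfer_op_def by (rule Bochner_Integration.integral_nonneg) (simp add: Sn hn)
  show de: "\<And>x. diff_op St B h x = indicator B x * transfer_op St h x"
    unfolding diff_op_def open_op_def by (auto simp: indicator_def)
  show "open_op St B h \<in> borel_measurable lborel"
    unfolding open_op_def using tm B by measurable
  show "diff_op St B h \<in> borel_measurable lborel"
    unfolding de[abs_def] using tm B by (intro borel_measurable_times borel_measurable_indicator) auto
  show "\<And>x. open_op St B h x \<ge> 0" unfolding open_op_def using tn by simp
  show "\<And>x. diff_op St B h x \<ge> 0" unfolding de using tn by simp
qed

lemma ops_split:
  fixes St :: "'a::euclidean_space \<Rightarrow> 'a \<Rightarrow> real"
  assumes Sm: "(\<lambda>(x, y). St x y) \<in> borel_measurable (lborel \<Otimes>\<^sub>M lborel)"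
    and Sn: "\<And>x y. St x y \<ge> 0"
    and S1: "\<And>x. (\<integral>\<^sup>+y. ennreal (St x y) \<partial>lborel) = 1"
    and B: "B \<in> sets borel"
    and h: "h \<in> borel_measurable lborel" and hn: "\<And>x. h x \<ge> 0"
  shows "(\<integral>\<^sup>+y. ennreal (diff_op St B h y) \<partial>lborel) + (\<integral>\<^sup>+y. ennreal (open_op St B h y) \<partial>lborel)
     \<le> (\<integral>\<^sup>+x. ennreal (h x) \<partial>lborel)"
proof -
  note ob = ops_basic[OF Sm Sn B h hn]
  have "(\<integral>\<^sup>+y. ennreal (diff_op St B h y) \<partial>lborel) + (\<integral>\<^sup>+y. ennreal (open_op St B h y) \<partial>lborel)
     = (\<integral>\<^sup>+y. ennreal (diff_op St B h y) + ennreal (open_op St B h y) \<partial>lborel)"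
    using ob(1-4) by (intro nn_integral_add[symmetric]) auto
  also have "\<dots> = (\<integral>\<^sup>+y. ennreal (transfer_op St h y) \<partial>lborel)"
    using ob(3,4) by (intro nn_integral_cong) (simp add: diff_op_def ennreal_plus[symmetric] del: ennreal_plus)
  also have "\<dots> \<le> (\<integral>\<^sup>+x. ennreal (h x) \<partial>lborel)" by (rule tr_contract[OF Sm Sn S1 h hn])
  finally show ?thesis .
qed

lemma telescope:
  fixes St :: "'a::euclidean_space \<Rightarrow> 'a \<Rightarrow> real"
  assumes Sm: "(\<lambda>(x, y). St x y) \<in> borel_measurable (lborel \<Otimes>\<^sub>M lborel)"
    and Sn: "\<And>x y. St x y \<ge> 0"
    and S1: "\<And>x. (\<integral>\<^sup>+y. ennreal (St x y) \<partial>lborel) = 1"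
    and B: "B \<in> sets borel"
    and h: "h \<in> borel_measurable lborel" and hn: "\<And>x. h x \<ge> 0"
  shows "(\<Sum>k<K. (\<integral>\<^sup>+y. ennreal (diff_op St B ((open_op St B ^^ k) h) y) \<partial>lborel))
     + (\<integral>\<^sup>+y. ennreal ((open_op St B ^^ K) h y) \<partial>lborel) \<le> (\<integral>\<^sup>+x. ennreal (h x) \<partial>lborel)"
proof -
  have P: "(open_op St B ^^ k) h \<in> borel_measurable lborel \<and> (\<forall>x. (open_op St B ^^ k) h x \<ge> 0)" for k
  proof (induction k)
    case 0 then show ?case using h hn by simp
  next
    case (Suc k) then show ?case using ops_basic[OF Sm Sn B, of "(open_op St B ^^ k) h"] by simp
  qed
  show ?thesis
  proof (induction K)
    case 0 then show ?case by simp
  next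
    case (Suc K)
    let ?g = "(open_op St B ^^ K) h"
    have "(\<Sum>k<Suc K. (\<integral>\<^sup>+y. ennreal (diff_op St B ((open_op St B ^^ k) h) y) \<partial>lborel))
      + (\<integral>\<^sup>+y. ennreal ((open_op St B ^^ Suc K) h y) \<partial>lborel)
      = (\<Sum>k<K. (\<integral>\<^sup>+y. ennreal (diff_op St B ((open_op St B ^^ k) h) y) \<partial>lborel))
      + ((\<integral>\<^sup>+y. ennreal (diff_op St B ?g y) \<partial>lborel) + (\<integral>\<^sup>+y. ennreal (open_op St B ?g y) \<partial>lborel))"
      by (simp add: add.assoc)
    also have "\<dots> \<le> (\<Sum>k<K. (\<integral>\<^sup>+y. ennreal (diff_op St B ((open_op St B ^^ k) h) y) \<partial>lborel))
      + (\<integral>\<^sup>+y. ennreal (?g y) \<partial>lborel)"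
      using P[of K] by (intro add_left_mono ops_split[OF Sm Sn S1 B]) auto
    also have "\<dots> \<le> (\<integral>\<^sup>+x. ennreal (h x) \<partial>lborel)" by (rule Suc)
    finally show ?case .
  qed
qed

theorem proposition30:
  fixes M :: "'w measure"
    and W :: "real \<Rightarrow> 'w \<Rightarrow> 'a::euclidean_space"
    and b :: "'a \<Rightarrow> 'a"
    and X :: "'a \<Rightarrow> real \<Rightarrow> 'w \<Rightarrow> 'a"
    and S :: "real \<Rightarrow> 'a \<Rightarrow> 'a \<Rightarrow> real"
    and f0 :: "'a \<Rightarrow> real"
    and R1 R2 Lb t :: real
    and x0 :: 'a
    and u :: "nat \<Rightarrow> real"
  assumes bm: "brownian_motion M W"
    and lip: "Lb-lipschitz_on UNIV b"
    and dissip: "R2 > 0" "\<And>x. inner (b x) x \<le> R1 - R2 * (norm x)\<^sup>2"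
    and sol: "\<And>x. sde_solution M b W x (X x)"
    and S_meas: "\<And>s. s > 0 \<Longrightarrow> (\<lambda>(x, y). S s x y) \<in> borel_measurable (lborel \<Otimes>\<^sub>M lborel)"
    and S_nonneg: "\<And>s x y. s > 0 \<Longrightarrow> S s x y \<ge> 0"
    and S_density: "\<And>s x. s > 0 \<Longrightarrow> distributed M lborel (X x s) (\<lambda>y. ennreal (S s x y))"
    and f0_meas: "f0 \<in> borel_measurable lborel"
    and f0_nonneg: "\<And>x. f0 x \<ge> 0"
    and mu_prob: "prob_space (density lborel (\<lambda>x. ennreal (f0 x)))"
    and mu_inv: "\<And>s A. s > 0 \<Longrightarrow> A \<in> sets borel \<Longrightarrow>
        (\<integral>\<^sup>+x. emeasure (distr M borel (X x s)) A \<partial>(density lborel (\<lambda>x. ennreal (f0 x))))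
          = emeasure (density lborel (\<lambda>x. ennreal (f0 x))) A"
    and t_pos: "t > 0"
    and u_lim: "filterlim u at_top sequentially"
    and q_conv: "\<And>k. convergent (\<lambda>n. q_coeff (S t) f0 (ball x0 (exp (- u n))) k)"
  shows "summable (\<lambda>k. lim (\<lambda>n. q_coeff (S t) f0 (ball x0 (exp (- u n))) k))
    \<and> (\<Sum>k. lim (\<lambda>n. q_coeff (S t) f0 (ball x0 (exp (- u n))) k)) \<le> 1"
proof -
  let ?mu = "density lborel (\<lambda>x. ennreal (f0 x))"
  let ?St = "S t"
  have Sm: "(\<lambda>(x, y). ?St x y) \<in> borel_measurable (lborel \<Otimes>\<^sub>M lborel)" using S_meas[OF t_pos] .
  have Sn: "\<And>x y. ?St x y \<ge> 0" using S_nonneg[OF t_pos] .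
  have PM: "prob_space M" using bm unfolding brownian_motion_def by blast
  interpret mu: prob_space ?mu by (rule mu_prob)
  have S1: "(\<integral>\<^sup>+y. ennreal (?St x y) \<partial>lborel) = 1" for x
  proof -
    have "emeasure M (X x t -` UNIV \<inter> space M) = (\<integral>\<^sup>+y. ennreal (?St x y) * indicator UNIV y \<partial>lborel)"
      by (rule distributed_emeasure[OF S_density[OF t_pos]]) simp
    moreover have "emeasure M (X x t -` UNIV \<inter> space M) = 1"
      using prob_space.emeasure_space_1[OF PM] by simp
    ultimately show ?thesis by simp
  qed
  have muB: "(\<integral>\<^sup>+y. ennreal (diff_op ?St B f0 y) \<partial>lborel) \<le> emeasure ?mu B" if B: "B \<in> sets borel" for B
  proof -
    have mS2: "(\<lambda>p. ?St (fst p) (snd p)) \<in> borel_measurable (lborel \<Otimes>\<^sub>M lborel)"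
      using Sm by (simp add: case_prod_beta)
    have mpair: "(\<lambda>(x, y). indicator B y * ennreal (?St x y * f0 x)) \<in> borel_measurable (lborel \<Otimes>\<^sub>M lborel)"
    proof -
      have "(\<lambda>p. f0 (fst p)) \<in> borel_measurable (lborel \<Otimes>\<^sub>M lborel)" using f0_meas by measurable
      moreover have "(\<lambda>p. indicator B (snd p) :: ennreal) \<in> borel_measurable (lborel \<Otimes>\<^sub>M lborel)"
        using B by measurable
      ultimately have "(\<lambda>p. indicator B (snd p) * ennreal (?St (fst p) (snd p) * f0 (fst p))) \<in> borel_measurable (lborel \<Otimes>\<^sub>M lborel)"
        using mS2 by measurable
      then show ?thesis by (simp add: case_prod_beta)
    qed
    let ?P = "\<lambda>x. \<integral>\<^sup>+y. ennreal (?St x y) * indicator B y \<partial>lborel"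
    have Pm: "?P \<in> borel_measurable lborel"
    proof -
      have "(\<lambda>(x, y). ennreal (?St x y) * indicator B y) \<in> borel_measurable (lborel \<Otimes>\<^sub>M lborel)"
      proof -
        have "(\<lambda>p. indicator B (snd p) :: ennreal) \<in> borel_measurable (lborel \<Otimes>\<^sub>M lborel)"
          using B by measurable
        then have "(\<lambda>p. ennreal (?St (fst p) (snd p)) * indicator B (snd p)) \<in> borel_measurable (lborel \<Otimes>\<^sub>M lborel)"
          using mS2 by measurable
        then show ?thesis by (simp add: case_prod_beta)
      qed
      then show ?thesis using lborel.borel_measurable_nn_integral by fastforce
    qed
    have Pe: "emeasure (distr M borel (X x t)) B = ?P x" for x
    proof -
      have Xm: "X x t \<in> measurable M borel"
        using S_density[OF t_pos, of x] unfolding distributed_def by simp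
      have "emeasure (distr M borel (X x t)) B = emeasure M (X x t -` B \<inter> space M)"
        using Xm B by (simp add: emeasure_distr)
      also have "\<dots> = ?P x"
        by (rule distributed_emeasure[OF S_density[OF t_pos]]) (use B in simp)
      finally show ?thesis .
    qed
    have g_eq: "(\<integral>\<^sup>+y. indicator B y * ennreal (?St x y * f0 x) \<partial>lborel)
        = ennreal (f0 x) * ?P x" for x
    proof -
      have "(\<integral>\<^sup>+y. indicator B y * ennreal (?St x y * f0 x) \<partial>lborel)
          = (\<integral>\<^sup>+y. ennreal (f0 x) * (ennreal (?St x y) * indicator B y) \<partial>lborel)"
        using Sn f0_nonneg by (intro nn_integral_cong) (simp add: ennreal_mult mult_ac)
      also have "\<dots> = ennreal (f0 x) * ?P x"
        using measurable_Pair2[OF Sm, of x] B by (intro nn_integral_cmult) simp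
      finally show ?thesis .
    qed
    have "(\<integral>\<^sup>+y. ennreal (diff_op ?St B f0 y) \<partial>lborel)
        = (\<integral>\<^sup>+y. indicator B y * ennreal (transfer_op ?St f0 y) \<partial>lborel)"
      using ops_basic(5)[OF Sm Sn B f0_meas f0_nonneg]
      by (intro nn_integral_cong) (simp add: indicator_def)
    also have "\<dots> \<le> (\<integral>\<^sup>+y. indicator B y * (\<integral>\<^sup>+x. ennreal (?St x y * f0 x) \<partial>lborel) \<partial>lborel)"
      by (intro nn_integral_mono mult_left_mono tr_enn[OF Sm Sn f0_meas f0_nonneg]) simp
    also have "\<dots> = (\<integral>\<^sup>+y. (\<integral>\<^sup>+x. indicator B y * ennreal (?St x y * f0 x) \<partial>lborel) \<partial>lborel)"
    proof (intro nn_integral_cong)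
      fix y
      have "(\<lambda>x. ?St x y) \<in> borel_measurable lborel" using measurable_Pair1[OF Sm, of y] by simp
      then have "(\<lambda>x. ennreal (?St x y * f0 x)) \<in> borel_measurable lborel"
        using f0_meas by measurable
      then show "indicator B y * (\<integral>\<^sup>+x. ennreal (?St x y * f0 x) \<partial>lborel) = (\<integral>\<^sup>+x. indicator B y * ennreal (?St x y * f0 x) \<partial>lborel)"
        by (rule nn_integral_cmult[symmetric])
    qed
    also have "\<dots> = (\<integral>\<^sup>+x. (\<integral>\<^sup>+y. indicator B y * ennreal (?St x y * f0 x) \<partial>lborel) \<partial>lborel)"
      using lborel_pair.Fubini'[OF mpair] by simp
    also have "\<dots> = (\<integral>\<^sup>+x. ennreal (f0 x) * ?P x \<partial>lborel)"
      by (simp add: g_eq)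
    also have "\<dots> = (\<integral>\<^sup>+x. ?P x \<partial>?mu)"
      using Pm f0_meas by (simp add: nn_integral_density)
    also have "\<dots> = (\<integral>\<^sup>+x. emeasure (distr M borel (X x t)) B \<partial>?mu)"
      by (simp add: Pe)
    also have "\<dots> = emeasure ?mu B" by (rule mu_inv[OF t_pos B])
    finally show ?thesis .
  qed
  have qb: "(\<Sum>k<K. q_coeff ?St f0 B k) \<le> 1 \<and> (\<forall>k. 0 \<le> q_coeff ?St f0 B k)" if B: "B \<in> sets borel" for B K
  proof -
    let ?h = "diff_op ?St B f0"
    let ?g = "\<lambda>k. diff_op ?St B ((open_op ?St B ^^ k) ?h)"
    let ?m = "measure ?mu B"
    have hm: "?h \<in> borel_measurable lborel" and hn: "\<And>x. ?h x \<ge> 0"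
      using ops_basic[OF Sm Sn B f0_meas f0_nonneg] by auto
    have P: "(open_op ?St B ^^ k) ?h \<in> borel_measurable lborel \<and> (\<forall>x. (open_op ?St B ^^ k) ?h x \<ge> 0)" for k
    proof (induction k)
      case 0 then show ?case using hm hn by simp
    next
      case (Suc k) then show ?case using ops_basic[OF Sm Sn B, of "(open_op ?St B ^^ k) ?h"] by simp
    qed
    have gm: "?g k \<in> borel_measurable lborel" and gn: "\<And>x. ?g k x \<ge> 0" for k
      using ops_basic[OF Sm Sn B, of "(open_op ?St B ^^ k) ?h"] P[of k] by auto
    have ie: "(\<integral>y. ?g k y \<partial>lborel) = enn2real (\<integral>\<^sup>+y. ennreal (?g k y) \<partial>lborel)" for k
      using gm gn by (intro integral_eq_nn_integral) auto
    have "(\<Sum>k<K. (\<integral>\<^sup>+y. ennreal (?g k y) \<partial>lborel)) \<le> (\<Sum>k<K. (\<integral>\<^sup>+y. ennreal (?g k y) \<partial>lborel))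
       + (\<integral>\<^sup>+y. ennreal ((open_op ?St B ^^ K) ?h y) \<partial>lborel)" by simp
    also have "\<dots> \<le> (\<integral>\<^sup>+x. ennreal (?h x) \<partial>lborel)" by (rule telescope[OF Sm Sn S1 B hm hn])
    also have "\<dots> \<le> emeasure ?mu B" by (rule muB[OF B])
    also have "\<dots> = ennreal ?m" by (simp add: mu.emeasure_eq_measure)
    finally have sle: "(\<Sum>k<K. (\<integral>\<^sup>+y. ennreal (?g k y) \<partial>lborel)) \<le> ennreal ?m" .
    have fin: "(\<integral>\<^sup>+y. ennreal (?g k y) \<partial>lborel) \<noteq> \<top>" if "k < K" for k
    proof -
      have "(\<integral>\<^sup>+y. ennreal (?g k y) \<partial>lborel) \<le> (\<Sum>k<K. (\<integral>\<^sup>+y. ennreal (?g k y) \<partial>lborel))"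
        using that by (intro member_le_sum) auto
      also have "\<dots> < \<top>" using sle by (simp add: le_less_trans)
      finally show ?thesis by simp
    qed
    have "ennreal (\<Sum>k<K. (\<integral>y. ?g k y \<partial>lborel)) = (\<Sum>k<K. ennreal (\<integral>y. ?g k y \<partial>lborel))"
      using gn by (intro sum_ennreal[symmetric]) (simp add: Bochner_Integration.integral_nonneg)
    also have "\<dots> = (\<Sum>k<K. (\<integral>\<^sup>+y. ennreal (?g k y) \<partial>lborel))"
      using fin by (intro sum.cong) (auto simp: ie ennreal_enn2real_if)
    finally have "ennreal (\<Sum>k<K. (\<integral>y. ?g k y \<partial>lborel)) \<le> ennreal ?m" using sle by simp
    then have sr: "(\<Sum>k<K. (\<integral>y. ?g k y \<partial>lborel)) \<le> ?m"
      by (simp add: ennreal_le_iff)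
    have qd: "q_coeff ?St f0 B k = (\<integral>y. ?g k y \<partial>lborel) / ?m" for k
      unfolding q_coeff_def by simp
    have q0: "\<forall>k. 0 \<le> q_coeff ?St f0 B k"
      unfolding qd using gn by (simp add: Bochner_Integration.integral_nonneg)
    have "(\<Sum>k<K. q_coeff ?St f0 B k) = (\<Sum>k<K. (\<integral>y. ?g k y \<partial>lborel)) / ?m"
      unfolding qd by (simp add: sum_divide_distrib)
    also have "\<dots> \<le> 1"
    proof (cases "?m = 0")
      case False
      then have "?m > 0" using measure_nonneg[of ?mu B] by linarith
      then show ?thesis using sr by simp
    qed simp
    finally show ?thesis using q0 by simp
  qed
  define l where "l k = lim (\<lambda>n. q_coeff ?St f0 (ball x0 (exp (- u n))) k)" for k
  have Bb: "ball x0 (exp (- u n)) \<in> sets borel" for n by simp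
  have lt: "(\<lambda>n. q_coeff ?St f0 (ball x0 (exp (- u n))) k) \<longlonglongrightarrow> l k" for k
    unfolding l_def using q_conv[of k] by (simp add: convergent_LIMSEQ_iff)
  have l0: "0 \<le> l k" for k
    by (rule LIMSEQ_le_const[OF lt]) (use qb[OF Bb] in auto)
  have lsum: "(\<Sum>k<K. l k) \<le> 1" for K
  proof (rule LIMSEQ_le_const2)
    show "(\<lambda>n. \<Sum>k<K. q_coeff ?St f0 (ball x0 (exp (- u n))) k) \<longlonglongrightarrow> (\<Sum>k<K. l k)"
      by (intro tendsto_sum lt)
    show "\<exists>N. \<forall>n\<ge>N. (\<Sum>k<K. q_coeff ?St f0 (ball x0 (exp (- u n))) k) \<le> 1"
      using qb[OF Bb] by blast
  qed
  have sm: "summable l" by (rule summableI_nonneg_bounded[OF l0 lsum])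
  have "suminf l \<le> 1" by (rule suminf_le_const[OF sm lsum])
  then show ?thesis using sm unfolding l_def by simp
qed

end
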